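(* Consider the sampling-based safety filter described in the context, run in closed loop for $t=0,1,2,\dots$ with $\mathbf{x}_{t+1}=f(\mathbf{x}_t,\mathbf{u}^{\mathrm{safe}}_t)$ and arbitrary nominal inputs. Let $\mathcal{C}\subseteq\mathcal{X}$ be a safe control invariant set with a known invariance control law $\mathbf{u}^{\mathrm{inv}}:\mathcal{C}\to\mathcal{U}$ satisfying $f(\mathbf{x},\mathbf{u}^{\mathrm{inv}}(\mathbf{x}))\in\mathcal{C}$ for every $\mathbf{x}\in\mathcal{C}$. Suppose the sampling space is restricted to control sequences whose terminal state lies in $\mathcal{C}$, i.e., at every time $t$ every sampled sequence $U^i_{t+1}$, rolled out from $\mathbf{x}_{t+1}=f(\mathbf{x}_t,\mathbf{u}^{\mathrm{nom}}_t)$, has terminal state $\mathbf{x}^{U^i_{t+1}}_H\in\mathcal{C}$. If the filter does not intervene at $t=0$, i.e. $\mathbf{u}^{\mathrm{safe}}_0=\mathbf{u}^{\mathrm{nom}}_0$, then the filter guarantees safety at all timesteps $t\ge0$: for every $t\ge 0$ there exists a control sequence $U_{t+1}\in\mathcal{U}^H$ whose rollout from $\mathbf{x}_{t+1}=f(\mathbf{x}_t,\mathbf{u}^{\mathrm{safe}}_t)$ is safe.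
   Context: Consider a deterministic discrete-time system $\mathbf{x}_{t+1}=f(\mathbf{x}_t,\mathbf{u}_t)$ with states $\mathbf{x}_t\in\mathcal{X}$ and inputs $\mathbf{u}_t\in\mathcal{U}$. Let $l:\mathcal{X}\to\mathbb{R}$ be a level function and $\mathcal{L}=\{\mathbf{x}: l(\mathbf{x})\le 0\}$ the failure set. Fix a horizon $H\ge1$. For a state $\mathbf{x}$ and $U=(\mathbf{u}_0,\dots,\mathbf{u}_{H-1})\in\mathcal{U}^H$, the rollout is $\mathbf{x}^U_0=\mathbf{x}$, $\mathbf{x}^U_{k+1}=f(\mathbf{x}^U_k,\mathbf{u}_k)$, with terminal state $\mathbf{x}^U_H$; the trajectory is safe ($\mathcal{O}_\tau=1$) if $\mathbf{x}^U_k\notin\mathcal{L}$ for all $k\in\{0,\dots,H\}$, and its cost is $C(\tau)=\max_{k\in\{0,\dots,H\}}\{-l(\mathbf{x}^U_k)\}$ (so $C(\tau)<0$ iff the trajectory is safe). A set $\mathcal{C}\subseteq\mathcal{X}$ is a safe control invariant set if $\mathcal{C}\cap\mathcal{L}=\emptyset$ and for every $\mathbf{x}\in\mathcal{C}$ there is $\mathbf{u}^{\mathrm{inv}}(\mathbf{x})\in\mathcal{U}$ with $f(\mathbf{x},\mathbf{u}^{\mathrm{inv}}(\mathbf{x}))\in\mathcal{C}$. Safety filter at time $t$: inputs are the current state $\mathbf{x}_t$, a nominal input $\mathbf{u}^{\mathrm{nom}}_t\in\mathcal{U}$ and a stored sequence $U^{\mathrm{safe}}_t=(\bar{\mathbf{u}}_t,\dots,\bar{\mathbf{u}}_{t+H-1})$.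 It computes $\mathbf{x}^{\mathrm{pred}}=f(\mathbf{x}_t,\mathbf{u}^{\mathrm{nom}}_t)$, draws $N$ sequences $U^1_{t+1},\dots,U^N_{t+1}$ from a sampling distribution $\tilde q_{t+1}$ on $\mathcal{U}^H$, rolls each out from $\mathbf{x}^{\mathrm{pred}}$, and lets $i^*$ minimize the cost. If the minimum cost is negative (the filter does not intervene; written $\mathbf{u}^{\mathrm{safe}}_t=\mathbf{u}^{\mathrm{nom}}_t$), it outputs $\mathbf{u}^{\mathrm{safe}}_t=\mathbf{u}^{\mathrm{nom}}_t$ and stores $U^{\mathrm{safe}}_{t+1}=U^{i^*}_{t+1}$. Otherwise (the filter intervenes), it outputs $\mathbf{u}^{\mathrm{safe}}_t=\bar{\mathbf{u}}_t$ and stores the shifted sequence $U^{\mathrm{safe}}_{t+1}=(\bar{\mathbf{u}}_{t+1},\dots,\bar{\mathbf{u}}_{t+H-1},\mathbf{u}^{\mathrm{inv}}(\bar{\mathbf{x}}))$, where $\bar{\mathbf{x}}$ is the terminal state of the rollout of $U^{\mathrm{safe}}_t$ from $\mathbf{x}_t$, i.e., the appended last input keeps the system inside $\mathcal{C}$. The closed-loop system applies $\mathbf{u}^{\mathrm{safe}}_t$. *)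

theory Defs
  imports Complex_Main
begin

text \<open>Rollout of an input sequence U (a list; U in U^H means length U = H) from state x:
  the list of states x^U_0, ..., x^U_(length U). The terminal state is its last element.\<close>
fun rollout :: "('x \<Rightarrow> 'u \<Rightarrow> 'x) \<Rightarrow> 'x \<Rightarrow> 'u list \<Rightarrow> 'x list" where
  "rollout f x [] = [x]"
| "rollout f x (u # us) = x # rollout f (f x u) us"

definition terminal :: "('x \<Rightarrow> 'u \<Rightarrow> 'x) \<Rightarrow> 'x \<Rightarrow> 'u list \<Rightarrow> 'x" where
  "terminal f x U = last (rollout f x U)"

definition failure_set :: "('x \<Rightarrow> real) \<Rightarrow> 'x set" where
  "failure_set l = {x. l x \<le> 0}"

definition traj_safe :: "('x \<Rightarrow> 'u \<Rightarrow> 'x) \<Rightarrow> ('x \<Rightarrow> real) \<Rightarrow> 'x \<Rightarrow> 'u list \<Rightarrow> bool" where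
  "traj_safe f l x U \<longleftrightarrow> (\<forall>y \<in> set (rollout f x U). y \<notin> failure_set l)"

definition traj_cost :: "('x \<Rightarrow> 'u \<Rightarrow> 'x) \<Rightarrow> ('x \<Rightarrow> real) \<Rightarrow> 'x \<Rightarrow> 'u list \<Rightarrow> real" where
  "traj_cost f l x U = Max ((\<lambda>y. - l y) ` set (rollout f x U))"

definition safe_control_invariant ::
  "('x \<Rightarrow> 'u \<Rightarrow> 'x) \<Rightarrow> ('x \<Rightarrow> real) \<Rightarrow> 'x set \<Rightarrow> ('x \<Rightarrow> 'u) \<Rightarrow> bool" where
  "safe_control_invariant f l C uinv \<longleftrightarrow>
     C \<inter> failure_set l = {} \<and> (\<forall>x \<in> C. f x (uinv x) \<in> C)"

text \<open>Inputs: current state xt, nominal input unom,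
  stored sequence Us, samples S i (i < N) drawn for time t+1. Outputs: applied input us and
  new stored sequence Us'.\<close>
definition filter_step ::
  "('x \<Rightarrow> 'u \<Rightarrow> 'x) \<Rightarrow> ('x \<Rightarrow> real) \<Rightarrow> ('x \<Rightarrow> 'u) \<Rightarrow> nat \<Rightarrow> 'x \<Rightarrow> 'u \<Rightarrow> 'u list
   \<Rightarrow> (nat \<Rightarrow> 'u list) \<Rightarrow> 'u \<Rightarrow> 'u list \<Rightarrow> bool" where
  "filter_step f l uinv N xt unom Us S us Us' \<longleftrightarrow>
     (let xpred = f xt unom in
      \<exists>istar < N. (\<forall>j < N. traj_cost f l xpred (S istar) \<le> traj_cost f l xpred (S j)) \<and>
        (if traj_cost f l xpred (S istar) < 0
         then us = unom \<and> Us' = S istar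
         else us = hd Us \<and> Us' = tl Us @ [uinv (terminal f xt Us)]))"

definition filter_no_intervention ::
  "('x \<Rightarrow> 'u \<Rightarrow> 'x) \<Rightarrow> ('x \<Rightarrow> real) \<Rightarrow> nat \<Rightarrow> 'x \<Rightarrow> 'u \<Rightarrow> (nat \<Rightarrow> 'u list) \<Rightarrow> bool" where
  "filter_no_intervention f l N xt unom S \<longleftrightarrow>
     (\<exists>i < N. traj_cost f l (f xt unom) (S i) < 0)"

end

theory Submission
  imports Defs
begin

lemma rollout_ne: "rollout f x U \<noteq> []"
  by (induction U arbitrary: x) auto

lemma rollout_snoc:
  "rollout f x (us @ [v]) = rollout f x us @ [f (terminal f x us) v]"
  by (induction us arbitrary: x) (auto simp: terminal_def rollout_ne)

lemma terminal_in: "terminal f x U \<in> set (rollout f x U)"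
  unfolding terminal_def using rollout_ne by (metis last_in_set)

lemma cost_neg_iff: "traj_cost f l x U < 0 \<longleftrightarrow> traj_safe f l x U"
proof -
  have fin: "finite ((\<lambda>y. - l y) ` set (rollout f x U))" by simp
  have ne: "(\<lambda>y. - l y) ` set (rollout f x U) \<noteq> {}" using rollout_ne by simp
  show ?thesis
    unfolding traj_cost_def traj_safe_def failure_set_def
    using Max_less_iff[OF fin ne] by auto
qed

theorem proposition2:
  fixes f :: "'x \<Rightarrow> 'u \<Rightarrow> 'x" and l :: "'x \<Rightarrow> real"
    and H N :: nat and C :: "'x set" and uinv :: "'x \<Rightarrow> 'u"
    and x :: "nat \<Rightarrow> 'x" and unom usafe :: "nat \<Rightarrow> 'u"
    and Usafe :: "nat \<Rightarrow> 'u list" and S :: "nat \<Rightarrow> nat \<Rightarrow> 'u list"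
  assumes H: "H \<ge> 1" and N: "N \<ge> 1"
    and inv: "safe_control_invariant f l C uinv"
    and samples_len: "\<And>t i. i < N \<Longrightarrow> length (S t i) = H"
    and init_len: "length (Usafe 0) = H"
    and filter: "\<And>t. filter_step f l uinv N (x t) (unom t) (Usafe t) (S t) (usafe t) (Usafe (Suc t))"
    and closed_loop: "\<And>t. x (Suc t) = f (x t) (usafe t)"
    and restricted: "\<And>t i. i < N \<Longrightarrow> terminal f (f (x t) (unom t)) (S t i) \<in> C"
    and no_int0: "filter_no_intervention f l N (x 0) (unom 0) (S 0)"
  shows "\<forall>t. \<exists>U. length U = H \<and> traj_safe f l (f (x t) (usafe t)) U"
proof -
  have Cs: "C \<inter> failure_set l = {}" and Ci: "\<And>y. y \<in> C \<Longrightarrow> f y (uinv y) \<in> C"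
    using inv unfolding safe_control_invariant_def by auto
  define P where "P t \<longleftrightarrow> length (Usafe (Suc t)) = H \<and> traj_safe f l (x (Suc t)) (Usafe (Suc t))
      \<and> terminal f (x (Suc t)) (Usafe (Suc t)) \<in> C" for t
  have noint: "P t" if ni: "traj_cost f l (f (x t) (unom t)) (S t i) < 0" "i < N" for t i
  proof -
    from filter[of t] obtain istar where ist: "istar < N"
      "\<forall>j < N. traj_cost f l (f (x t) (unom t)) (S t istar) \<le> traj_cost f l (f (x t) (unom t)) (S t j)"
      "if traj_cost f l (f (x t) (unom t)) (S t istar) < 0
         then usafe t = unom t \<and> Usafe (Suc t) = S t istar
         else usafe t = hd (Usafe t) \<and> Usafe (Suc t) = tl (Usafe t) @ [uinv (terminal f (x t) (Usafe t))]"
      unfolding filter_step_def Let_def by blast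
    have neg: "traj_cost f l (f (x t) (unom t)) (S t istar) < 0" using ist(2) ni by force
    then have "usafe t = unom t" "Usafe (Suc t) = S t istar" using ist(3) by auto
    then show ?thesis unfolding P_def using closed_loop[of t] samples_len[OF ist(1)]
        restricted[OF ist(1)] neg cost_neg_iff by metis
  qed
  have step: "P (Suc t)" if Pt: "P t" for t
  proof (cases "\<exists>i<N. traj_cost f l (f (x (Suc t)) (unom (Suc t))) (S (Suc t) i) < 0")
    case True then show ?thesis using noint by blast
  next
    case False
    from filter[of "Suc t"] obtain istar where ist: "istar < N"
      "\<forall>j < N. traj_cost f l (f (x (Suc t)) (unom (Suc t))) (S (Suc t) istar) \<le> traj_cost f l (f (x (Suc t)) (unom (Suc t))) (S (Suc t) j)"
      "if traj_cost f l (f (x (Suc t)) (unom (Suc t))) (S (Suc t) istar) < 0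
         then usafe (Suc t) = unom (Suc t) \<and> Usafe (Suc (Suc t)) = S (Suc t) istar
         else usafe (Suc t) = hd (Usafe (Suc t)) \<and> Usafe (Suc (Suc t)) = tl (Usafe (Suc t)) @ [uinv (terminal f (x (Suc t)) (Usafe (Suc t)))]"
      unfolding filter_step_def Let_def by blast
    have nn: "\<not> traj_cost f l (f (x (Suc t)) (unom (Suc t))) (S (Suc t) istar) < 0"
      using False ist(1) by blast
    define X where "X = x (Suc t)"
    obtain u us where U: "Usafe (Suc t) = u # us" using Pt H unfolding P_def
      by (cases "Usafe (Suc t)") auto
    have e1: "usafe (Suc t) = u" "Usafe (Suc (Suc t)) = us @ [uinv (terminal f X (u # us))]"
      using ist(3) nn U unfolding X_def by auto
    have x2: "x (Suc (Suc t)) = f X u" using closed_loop[of "Suc t"] e1 X_def by simp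
    have tX: "terminal f X (u # us) = terminal f (f X u) us"
      by (simp add: terminal_def rollout_ne)
    have sX: "traj_safe f l X (u # us)" and cX: "terminal f X (u # us) \<in> C"
      and lX: "length (u # us) = H"
      using Pt U unfolding P_def X_def by auto
    let ?T = "terminal f (f X u) us"
    have TC: "f ?T (uinv ?T) \<in> C" using Ci cX tX by simp
    have "traj_safe f l (f X u) (us @ [uinv ?T])"
      using sX TC Cs unfolding traj_safe_def by (auto simp: rollout_snoc)
    moreover have "terminal f (f X u) (us @ [uinv ?T]) \<in> C"
      using TC by (simp add: terminal_def rollout_snoc)
    moreover have "length (us @ [uinv ?T]) = H" using lX by simp
    ultimately show ?thesis unfolding P_def using x2 e1 tX by simp
  qed
  have P0: "P 0" using no_int0 noint unfolding filter_no_intervention_def by blast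
  have "P t" for t by (induction t) (use P0 step in auto)
  then show ?thesis unfolding P_def using closed_loop by metis
qed

end
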